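(* Let $L$ be a finite-dimensional Lie algebra over a field $F$. The relation "is $L$-connected to" is an equivalence relation on the set of chief factors of $L$.
   Context: A chief factor of $L$ is a quotient $A/B$ of ideals $B\subsetneq A$ with no ideal of $L$ strictly between them; two chief factors are $L$-isomorphic if they are isomorphic as $L$-modules. The core $U_L$ of a subalgebra is the largest ideal of $L$ contained in it; $L$ is primitive if it has a maximal subalgebra with zero core, and a primitive Lie algebra is of type 3 if it has precisely two distinct minimal ideals, both non-abelian. Two chief factors $A_1/B_1$, $A_2/B_2$ of $L$ are $L$-connected if either they are $L$-isomorphic, or there is an ideal $N$ of $L$ such that $L/N$ is primitive of type 3 and its two minimal ideals $E_1/N$, $E_2/N$ satisfy $E_1/N \cong_L A_1/B_1$ and $E_2/N \cong_L A_2/B_2$ (as $L$-modules). *)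

theory Defs
  imports Main "HOL.Vector_Spaces"
begin

definition lie_algebra :: "('k::field \<Rightarrow> 'v::ab_group_add \<Rightarrow> 'v) \<Rightarrow> ('v \<Rightarrow> 'v \<Rightarrow> 'v) \<Rightarrow> bool" where
  "lie_algebra scale br \<longleftrightarrow> vector_space scale
     \<and> (\<forall>x y z. br (x + y) z = br x z + br y z)
     \<and> (\<forall>x y z. br x (y + z) = br x y + br x z)
     \<and> (\<forall>c x y. br (scale c x) y = scale c (br x y))
     \<and> (\<forall>c x y. br x (scale c y) = scale c (br x y))
     \<and> (\<forall>x. br x x = 0)
     \<and> (\<forall>x y z. br x (br y z) + br y (br z x) + br z (br x y) = 0)"

definition finite_dim :: "('k::field \<Rightarrow> 'v::ab_group_add \<Rightarrow> 'v) \<Rightarrow> bool" where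
  "finite_dim scale \<longleftrightarrow> (\<exists>B. finite B \<and> module.span scale B = UNIV)"

definition lie_ideal :: "('k::field \<Rightarrow> 'v::ab_group_add \<Rightarrow> 'v) \<Rightarrow> ('v \<Rightarrow> 'v \<Rightarrow> 'v) \<Rightarrow> 'v set \<Rightarrow> bool" where
  "lie_ideal scale br I \<longleftrightarrow> module.subspace scale I \<and> (\<forall>x a. a \<in> I \<longrightarrow> br x a \<in> I)"

definition lie_subalgebra :: "('k::field \<Rightarrow> 'v::ab_group_add \<Rightarrow> 'v) \<Rightarrow> ('v \<Rightarrow> 'v \<Rightarrow> 'v) \<Rightarrow> 'v set \<Rightarrow> bool" where
  "lie_subalgebra scale br S \<longleftrightarrow> module.subspace scale S \<and> (\<forall>a\<in>S. \<forall>b\<in>S. br a b \<in> S)"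

definition chief_factor :: "('k::field \<Rightarrow> 'v::ab_group_add \<Rightarrow> 'v) \<Rightarrow> ('v \<Rightarrow> 'v \<Rightarrow> 'v) \<Rightarrow> 'v set \<Rightarrow> 'v set \<Rightarrow> bool" where
  "chief_factor scale br A B \<longleftrightarrow> lie_ideal scale br A \<and> lie_ideal scale br B \<and> B \<subset> A
     \<and> \<not> (\<exists>C. lie_ideal scale br C \<and> B \<subset> C \<and> C \<subset> A)"

definition chief_factors :: "('k::field \<Rightarrow> 'v::ab_group_add \<Rightarrow> 'v) \<Rightarrow> ('v \<Rightarrow> 'v \<Rightarrow> 'v) \<Rightarrow> ('v set \<times> 'v set) set" where
  "chief_factors scale br = {(A, B). chief_factor scale br A B}"

text \<open>A/B and A'/B' (with B \<subseteq> A, B' \<subseteq> A' ideals) are isomorphic as L-modules (adjoint action):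
  there is a linear map f : A \<rightarrow> A' inducing a bijective L-module homomorphism A/B \<rightarrow> A'/B'.\<close>
definition lie_mod_iso :: "('k::field \<Rightarrow> 'v::ab_group_add \<Rightarrow> 'v) \<Rightarrow> ('v \<Rightarrow> 'v \<Rightarrow> 'v) \<Rightarrow> 'v set \<Rightarrow> 'v set \<Rightarrow> 'v set \<Rightarrow> 'v set \<Rightarrow> bool" where
  "lie_mod_iso scale br A B A' B' \<longleftrightarrow> (\<exists>f.
       (\<forall>a\<in>A. \<forall>b\<in>A. f (a + b) = f a + f b)
     \<and> (\<forall>c. \<forall>a\<in>A. f (scale c a) = scale c (f a))
     \<and> f ` A \<subseteq> A'
     \<and> (\<forall>a\<in>A. f a \<in> B' \<longleftrightarrow> a \<in> B)
     \<and> (\<forall>a'\<in>A'. \<exists>a\<in>A. a' - f a \<in> B')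
     \<and> (\<forall>x. \<forall>a\<in>A. br x (f a) - f (br x a) \<in> B'))"

definition maximal_subalgebra :: "('k::field \<Rightarrow> 'v::ab_group_add \<Rightarrow> 'v) \<Rightarrow> ('v \<Rightarrow> 'v \<Rightarrow> 'v) \<Rightarrow> 'v set \<Rightarrow> bool" where
  "maximal_subalgebra scale br M \<longleftrightarrow> lie_subalgebra scale br M \<and> M \<noteq> UNIV
     \<and> (\<forall>S. lie_subalgebra scale br S \<and> M \<subseteq> S \<longrightarrow> S = M \<or> S = UNIV)"

text \<open>L/N is primitive: L/N has a maximal subalgebra M/N whose core (in L/N) is zero.
  Subalgebras/ideals of L/N correspond to subalgebras/ideals of L containing N.\<close>
definition quotient_primitive :: "('k::field \<Rightarrow> 'v::ab_group_add \<Rightarrow> 'v) \<Rightarrow> ('v \<Rightarrow> 'v \<Rightarrow> 'v) \<Rightarrow> 'v set \<Rightarrow> bool" where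
  "quotient_primitive scale br N \<longleftrightarrow> lie_ideal scale br N \<and>
     (\<exists>M. N \<subseteq> M \<and> maximal_subalgebra scale br M
        \<and> (\<forall>I. lie_ideal scale br I \<and> N \<subseteq> I \<and> I \<subseteq> M \<longrightarrow> I = N))"

definition minimal_ideal_over :: "('k::field \<Rightarrow> 'v::ab_group_add \<Rightarrow> 'v) \<Rightarrow> ('v \<Rightarrow> 'v \<Rightarrow> 'v) \<Rightarrow> 'v set \<Rightarrow> 'v set \<Rightarrow> bool" where
  "minimal_ideal_over scale br N E \<longleftrightarrow> lie_ideal scale br E \<and> N \<subset> E
     \<and> \<not> (\<exists>C. lie_ideal scale br C \<and> N \<subset> C \<and> C \<subset> E)"

definition nonabelian_over :: "('v \<Rightarrow> 'v \<Rightarrow> 'v) \<Rightarrow> 'v set \<Rightarrow> 'v set \<Rightarrow> bool" where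
  "nonabelian_over br N E \<longleftrightarrow> (\<exists>a\<in>E. \<exists>b\<in>E. br a b \<notin> N)"

definition quotient_primitive_type3 :: "('k::field \<Rightarrow> 'v::ab_group_add \<Rightarrow> 'v) \<Rightarrow> ('v \<Rightarrow> 'v \<Rightarrow> 'v) \<Rightarrow> 'v set \<Rightarrow> bool" where
  "quotient_primitive_type3 scale br N \<longleftrightarrow> quotient_primitive scale br N
     \<and> (\<exists>E1 E2. E1 \<noteq> E2 \<and> minimal_ideal_over scale br N E1 \<and> minimal_ideal_over scale br N E2
          \<and> (\<forall>E. minimal_ideal_over scale br N E \<longrightarrow> E = E1 \<or> E = E2))
     \<and> (\<forall>E. minimal_ideal_over scale br N E \<longrightarrow> nonabelian_over br N E)"

definition L_connected :: "('k::field \<Rightarrow> 'v::ab_group_add \<Rightarrow> 'v) \<Rightarrow> ('v \<Rightarrow> 'v \<Rightarrow> 'v) \<Rightarrow> 'v set \<Rightarrow> 'v set \<Rightarrow> 'v set \<Rightarrow> 'v set \<Rightarrow> bool" where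
  "L_connected scale br A1 B1 A2 B2 \<longleftrightarrow> lie_mod_iso scale br A1 B1 A2 B2 \<or>
     (\<exists>N E1 E2. quotient_primitive_type3 scale br N \<and> E1 \<noteq> E2
        \<and> minimal_ideal_over scale br N E1 \<and> minimal_ideal_over scale br N E2
        \<and> lie_mod_iso scale br E1 N A1 B1 \<and> lie_mod_iso scale br E2 N A2 B2)"

definition L_connected_rel :: "('k::field \<Rightarrow> 'v::ab_group_add \<Rightarrow> 'v) \<Rightarrow> ('v \<Rightarrow> 'v \<Rightarrow> 'v) \<Rightarrow> (('v set \<times> 'v set) \<times> ('v set \<times> 'v set)) set" where
  "L_connected_rel scale br = {((A1, B1), (A2, B2)).
     chief_factor scale br A1 B1 \<and> chief_factor scale br A2 B2 \<and> L_connected scale br A1 B1 A2 B2}"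

end

theory Submission
  imports Defs
begin


lemma section_exists:
  fixes scale :: "'k::field \<Rightarrow> 'v::ab_group_add \<Rightarrow> 'v"
  assumes vs: "vector_space scale"
    and U: "module.subspace scale U" and A: "module.subspace scale A" and P: "module.subspace scale P"
    and fadd: "\<forall>a\<in>A. \<forall>b\<in>A. f (a + b) = f a + f b"
    and fsc: "\<forall>c. \<forall>a\<in>A. f (scale c a) = scale c (f a)"
    and cov: "\<forall>u\<in>U. \<exists>a\<in>A. u - f a \<in> P"
  shows "\<exists>g. (\<forall>x y. g (x + y) = g x + g y) \<and> (\<forall>c x. g (scale c x) = scale c (g x))
            \<and> (\<forall>u\<in>U. g u \<in> A \<and> u - f (g u) \<in> P)"
proof -
  interpret vector_space scale by (rule vs)
  interpret vp: vector_space_pair scale scale by unfold_locales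
  obtain B where B: "B \<subseteq> U" "independent B" "U \<subseteq> span B" by (rule basis_exists)
  define h where "h b = (SOME a. a \<in> A \<and> b - f a \<in> P)" for b
  have h: "h b \<in> A \<and> b - f (h b) \<in> P" if "b \<in> B" for b
  proof -
    from cov B(1) that obtain a where "a \<in> A \<and> b - f a \<in> P" by blast
    then show ?thesis unfolding h_def by (rule someI)
  qed
  define g where "g = vp.construct B h"
  have lin: "Vector_Spaces.linear scale scale g" unfolding g_def by (rule vp.linear_construct[OF B(2)])
  then have gadd: "\<forall>x y. g (x + y) = g x + g y" and gsc: "\<forall>c x. g (scale c x) = scale c (g x)"
    by (auto simp: linear_iff)
  have gB: "g b = h b" if "b \<in> B" for b unfolding g_def using vp.construct_basis[OF B(2) that] .
  have f0: "f 0 = 0"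
  proof -
    have "f 0 + f 0 = f 0 + 0" using fadd subspace_0[OF A] by (metis add_0_right)
    then show ?thesis by (rule add_left_imp_eq)
  qed
  have "g u \<in> A \<and> u - f (g u) \<in> P" if "u \<in> span B" for u
    using that
  proof (induction rule: span_induct)
    case base
    show ?case
    proof (rule subspaceI)
      have "g 0 + g 0 = g 0 + 0" using gadd by (metis add_0_right)
      then have "g 0 = 0" by (rule add_left_imp_eq)
      then show "0 \<in> {u. g u \<in> A \<and> u - f (g u) \<in> P}" using f0 subspace_0[OF A] subspace_0[OF P] by simp
    next
      fix x y assume x: "x \<in> {u. g u \<in> A \<and> u - f (g u) \<in> P}" and y: "y \<in> {u. g u \<in> A \<and> u - f (g u) \<in> P}"
      have ga: "g x \<in> A" "g y \<in> A" using x y by auto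
      have e: "x + y - f (g (x + y)) = (x - f (g x)) + (y - f (g y))"
        using gadd fadd ga by (simp add: algebra_simps)
      have "(x - f (g x)) + (y - f (g y)) \<in> P" using x y subspace_add[OF P] by blast
      then have "x + y - f (g (x + y)) \<in> P" unfolding e .
      moreover have "g (x + y) \<in> A" using ga gadd subspace_add[OF A] by simp
      ultimately show "x + y \<in> {u. g u \<in> A \<and> u - f (g u) \<in> P}" by simp
    next
      fix c x assume x: "x \<in> {u. g u \<in> A \<and> u - f (g u) \<in> P}"
      have "scale c x - f (g (scale c x)) = scale c (x - f (g x))"
        using gsc fsc x by (simp add: scale_right_diff_distrib)
      then show "scale c x \<in> {u. g u \<in> A \<and> u - f (g u) \<in> P}"
        using x gsc subspace_scale[OF A] subspace_scale[OF P] by auto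
    qed
  next
    case (step x)
    then show ?case using h gB by simp
  qed
  then show ?thesis using gadd gsc B(3) by blast
qed

locale lie =
  fixes scale :: "'k::field \<Rightarrow> 'v::ab_group_add \<Rightarrow> 'v" and br :: "'v \<Rightarrow> 'v \<Rightarrow> 'v"
  assumes lie: "lie_algebra scale br"
begin

lemmas L = lie[unfolded lie_algebra_def]

sublocale vector_space scale by (rule conjunct1[OF L])

lemma br_addl: "br (x + y) z = br x z + br y z" by (rule conjunct1[OF conjunct2[OF L], rule_format])
lemma br_addr: "br x (y + z) = br x y + br x z" by (rule conjunct1[OF conjunct2[OF conjunct2[OF L]], rule_format])
lemma br_scl: "br (scale c x) y = scale c (br x y)" by (rule conjunct1[OF conjunct2[OF conjunct2[OF conjunct2[OF L]]], rule_format])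
lemma br_scr: "br x (scale c y) = scale c (br x y)" by (rule conjunct1[OF conjunct2[OF conjunct2[OF conjunct2[OF conjunct2[OF L]]]], rule_format])
lemma br_self: "br x x = 0" by (rule conjunct1[OF conjunct2[OF conjunct2[OF conjunct2[OF conjunct2[OF conjunct2[OF L]]]]], rule_format])
lemma jacobi: "br x (br y z) + br y (br z x) + br z (br x y) = 0" by (rule conjunct2[OF conjunct2[OF conjunct2[OF conjunct2[OF conjunct2[OF conjunct2[OF L]]]]], rule_format])

lemma br_0l[simp]: "br 0 x = 0"
proof -
  have "br 0 x + br 0 x = br (0 + 0) x" by (rule br_addl[symmetric])
  also have "\<dots> = br 0 x + 0" by simp
  finally show ?thesis by (rule add_left_imp_eq)
qed
lemma br_0r[simp]: "br x 0 = 0"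
proof -
  have "br x 0 + br x 0 = br x (0 + 0)" by (rule br_addr[symmetric])
  also have "\<dots> = br x 0 + 0" by simp
  finally show ?thesis by (rule add_left_imp_eq)
qed
lemma br_negl: "br (- x) y = - br x y"
proof -
  have "br (- x) y + br x y = br (- x + x) y" by (rule br_addl[symmetric])
  also have "\<dots> = 0" by simp
  finally show ?thesis by (simp add: eq_neg_iff_add_eq_0)
qed
lemma br_negr: "br x (- y) = - br x y"
proof -
  have "br x (- y) + br x y = br x (- y + y)" by (rule br_addr[symmetric])
  also have "\<dots> = 0" by simp
  finally show ?thesis by (simp add: eq_neg_iff_add_eq_0)
qed
lemma br_diffl: "br (x - y) z = br x z - br y z" by (simp only: diff_conv_add_uminus br_addl br_negl)
lemma br_diffr: "br x (y - z) = br x y - br x z" by (simp only: diff_conv_add_uminus br_addr br_negr)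
lemma br_anti: "br x y = - br y x"
proof -
  have "br (x + y) (x + y) = (br x x + br y x) + (br x y + br y y)" by (simp only: br_addl br_addr)
  then have "0 = br y x + br x y" by (simp only: br_self add_0_left add_0_right)
  then have "0 = br x y + br y x" by (simp only: add.commute)
  then have "br x y + br y x = 0" by (rule sym)
  then show ?thesis by (simp add: eq_neg_iff_add_eq_0)
qed

abbreviation lid where "lid \<equiv> lie_ideal scale br"

lemma lid_sub: "lid I \<Longrightarrow> subspace I" unfolding lie_ideal_def by blast
lemma lid_l: "lid I \<Longrightarrow> a \<in> I \<Longrightarrow> br x a \<in> I" unfolding lie_ideal_def by blast
lemma lid_neg: "lid I \<Longrightarrow> a \<in> I \<Longrightarrow> - a \<in> I" using lid_sub subspace_neg by blast
lemma lid_r: "lid I \<Longrightarrow> a \<in> I \<Longrightarrow> br a x \<in> I"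
proof -
  assume "lid I" "a \<in> I"
  then have "- br x a \<in> I" using lid_l lid_neg by blast
  then show ?thesis using br_anti[of a x] by simp
qed
lemma lid_0: "lid I \<Longrightarrow> 0 \<in> I" using lid_sub subspace_0 by blast
lemma lid_add: "lid I \<Longrightarrow> a \<in> I \<Longrightarrow> b \<in> I \<Longrightarrow> a + b \<in> I" using lid_sub subspace_add by blast
lemma lid_diff: "lid I \<Longrightarrow> a \<in> I \<Longrightarrow> b \<in> I \<Longrightarrow> a - b \<in> I" using lid_sub subspace_diff by blast
lemma lid_int: "lid I \<Longrightarrow> lid J \<Longrightarrow> lid (I \<inter> J)"
  unfolding lie_ideal_def using subspace_inter by blast

lemma br_cong: "lid I \<Longrightarrow> a - b \<in> I \<Longrightarrow> c - d \<in> I \<Longrightarrow> br a c - br b d \<in> I"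
proof -
  assume I: "lid I" "a - b \<in> I" "c - d \<in> I"
  have "br a c - br b d = br (a - b) c + br b (c - d)" by (simp add: br_diffl br_diffr)
  moreover have "br (a - b) c \<in> I" using I lid_r by blast
  moreover have "br b (c - d) \<in> I" using I lid_l by blast
  ultimately show ?thesis using I lid_add by simp
qed

lemma br_both: "lid I \<Longrightarrow> lid J \<Longrightarrow> a \<in> I \<Longrightarrow> b \<in> J \<Longrightarrow> br a b \<in> I \<inter> J"
  using lid_l lid_r by blast

end



context lie
begin

definition cent where "cent A B = {x. \<forall>a\<in>A. br x a \<in> B}"

lemma cent_lid:
  assumes A: "lid A" and B: "lid B"
  shows "lid (cent A B)"
  unfolding lie_ideal_def
proof (intro conjI allI impI)
  show "subspace (cent A B)"
  proof (rule subspaceI)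
    show "0 \<in> cent A B" unfolding cent_def using lid_0[OF B] by simp
  next
    fix x y assume "x \<in> cent A B" "y \<in> cent A B"
    then show "x + y \<in> cent A B" unfolding cent_def using lid_add[OF B] by (simp add: br_addl)
  next
    fix c x assume "x \<in> cent A B"
    then show "scale c x \<in> cent A B" unfolding cent_def using subspace_scale[OF lid_sub[OF B]] by (simp add: br_scl)
  qed
next
  fix y x assume x: "x \<in> cent A B"
  show "br y x \<in> cent A B" unfolding cent_def mem_Collect_eq
  proof
    fix a assume a: "a \<in> A"
    have j: "br y (br x a) + br x (br a y) + br a (br y x) = 0" by (rule jacobi)
    have 1: "br y (br x a) \<in> B" using x a lid_l[OF B] unfolding cent_def by blast
    have 2: "br x (br a y) \<in> B" using x lid_r[OF A a] unfolding cent_def by blast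
    have j2: "br a (br y x) + (br y (br x a) + br x (br a y)) = 0" using j by (simp only: ac_simps)
    have e: "br a (br y x) = - (br y (br x a) + br x (br a y))" using j2 by (rule eq_neg_iff_add_eq_0[THEN iffD2])
    have "- (br y (br x a) + br x (br a y)) \<in> B" using 1 2 lid_add[OF B] lid_neg[OF B] by blast
    then have "br a (br y x) \<in> B" unfolding e .
    then show "br (br y x) a \<in> B" using br_anti[of "br y x" a] lid_neg[OF B] by simp
  qed
qed

lemma iso_refl:
  assumes "lid A" "lid B"
  shows "lie_mod_iso scale br A B A B"
proof -
  have z: "0 \<in> B" using lid_0 assms(2) by blast
  have ex: "\<forall>a'\<in>A. \<exists>a\<in>A. a' - a \<in> B"
  proof
    fix a' assume "a' \<in> A"
    moreover have "a' - a' \<in> B" using z by simp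
    ultimately show "\<exists>a\<in>A. a' - a \<in> B" by blast
  qed
  show ?thesis unfolding lie_mod_iso_def
    by (rule exI[of _ "\<lambda>a. a"]) (simp add: z ex)
qed

lemma iso_trans:
  assumes A: "lid A" and A': "lid A'" and B'': "lid B''"
    and i1: "lie_mod_iso scale br A B A' B'" and i2: "lie_mod_iso scale br A' B' A'' B''"
  shows "lie_mod_iso scale br A B A'' B''"
proof -
  from i1 obtain f where f1: "\<forall>a\<in>A. \<forall>b\<in>A. f (a + b) = f a + f b"
    and f2: "\<forall>c. \<forall>a\<in>A. f (scale c a) = scale c (f a)" and f3: "f ` A \<subseteq> A'"
    and f4: "\<forall>a\<in>A. f a \<in> B' \<longleftrightarrow> a \<in> B" and f5: "\<forall>a'\<in>A'. \<exists>a\<in>A. a' - f a \<in> B'"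
    and f6: "\<forall>x. \<forall>a\<in>A. br x (f a) - f (br x a) \<in> B'"
    unfolding lie_mod_iso_def by blast
  from i2 obtain g where g1: "\<forall>a\<in>A'. \<forall>b\<in>A'. g (a + b) = g a + g b"
    and g2: "\<forall>c. \<forall>a\<in>A'. g (scale c a) = scale c (g a)" and g3: "g ` A' \<subseteq> A''"
    and g4: "\<forall>a\<in>A'. g a \<in> B'' \<longleftrightarrow> a \<in> B'" and g5: "\<forall>a'\<in>A''. \<exists>a\<in>A'. a' - g a \<in> B''"
    and g6: "\<forall>x. \<forall>a\<in>A'. br x (g a) - g (br x a) \<in> B''"
    unfolding lie_mod_iso_def by blast
  have gdiff: "g (a - b) = g a - g b" if "a \<in> A'" "b \<in> A'" for a b
  proof -
    have "a - b \<in> A'" using that lid_diff[OF A'] by blast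
    then have "g (a - b + b) = g (a - b) + g b" using g1 that by blast
    then show ?thesis by (simp add: algebra_simps)
  qed
  have fA: "f a \<in> A'" if "a \<in> A" for a using f3 that by blast
  show ?thesis unfolding lie_mod_iso_def
  proof (rule exI[of _ "\<lambda>a. g (f a)"], intro conjI)
    show "\<forall>a\<in>A. \<forall>b\<in>A. g (f (a + b)) = g (f a) + g (f b)" using f1 g1 fA by simp
    show "\<forall>c. \<forall>a\<in>A. g (f (scale c a)) = scale c (g (f a))" using f2 g2 fA by simp
    show "(\<lambda>a. g (f a)) ` A \<subseteq> A''" using g3 fA by blast
    show "\<forall>a\<in>A. g (f a) \<in> B'' \<longleftrightarrow> a \<in> B" using f4 g4 fA by simp
    show "\<forall>a'\<in>A''. \<exists>a\<in>A. a' - g (f a) \<in> B''"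
    proof
      fix a'' assume "a'' \<in> A''"
      then obtain a' where a': "a' \<in> A'" "a'' - g a' \<in> B''" using g5 by blast
      then obtain a where a: "a \<in> A" "a' - f a \<in> B'" using f5 by blast
      have "a' - f a \<in> A'" using a' a fA lid_diff[OF A'] by blast
      then have "g (a' - f a) \<in> B''" using g4 a by blast
      then have "g a' - g (f a) \<in> B''" using gdiff a' a fA by simp
      then have "(a'' - g a') + (g a' - g (f a)) \<in> B''" using a' lid_add[OF B''] by blast
      then show "\<exists>a\<in>A. a'' - g (f a) \<in> B''" using a by auto
    qed
    show "\<forall>x. \<forall>a\<in>A. br x (g (f a)) - g (f (br x a)) \<in> B''"
    proof (intro allI ballI)
      fix x a assume a: "a \<in> A"
      have 1: "br x (g (f a)) - g (br x (f a)) \<in> B''" using g6 fA a by blast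
      have m1: "br x (f a) \<in> A'" using lid_l[OF A' fA[OF a]] .
      have m2: "f (br x a) \<in> A'" using fA lid_l[OF A a] by blast
      have "br x (f a) - f (br x a) \<in> A'" using m1 m2 lid_diff[OF A'] by blast
      then have "g (br x (f a) - f (br x a)) \<in> B''" using g4 f6 a by blast
      then have 2: "g (br x (f a)) - g (f (br x a)) \<in> B''" using gdiff m1 m2 by simp
      have "(br x (g (f a)) - g (br x (f a))) + (g (br x (f a)) - g (f (br x a))) \<in> B''"
        using 1 2 lid_add[OF B''] by blast
      then show "br x (g (f a)) - g (f (br x a)) \<in> B''" by simp
    qed
  qed
qed

end


context lie
begin

lemma vs: "vector_space scale" using lie unfolding lie_algebra_def by blast

lemma iso_sym:
  assumes A: "lid A" and B: "lid B" and A': "lid A'" and B': "lid B'"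
    and i1: "lie_mod_iso scale br A B A' B'"
  shows "lie_mod_iso scale br A' B' A B"
proof -
  from i1 obtain f where f1: "\<forall>a\<in>A. \<forall>b\<in>A. f (a + b) = f a + f b"
    and f2: "\<forall>c. \<forall>a\<in>A. f (scale c a) = scale c (f a)" and f3: "f ` A \<subseteq> A'"
    and f4: "\<forall>a\<in>A. f a \<in> B' \<longleftrightarrow> a \<in> B" and f5: "\<forall>a'\<in>A'. \<exists>a\<in>A. a' - f a \<in> B'"
    and f6: "\<forall>x. \<forall>a\<in>A. br x (f a) - f (br x a) \<in> B'"
    unfolding lie_mod_iso_def by blast
  obtain g where g1: "\<forall>x y. g (x + y) = g x + g y" and g2: "\<forall>c x. g (scale c x) = scale c (g x)"
    and g3: "\<forall>u\<in>A'. g u \<in> A \<and> u - f (g u) \<in> B'"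
    using section_exists[OF vs lid_sub[OF A'] lid_sub[OF A] lid_sub[OF B'] f1 f2 f5] by blast
  have fdiff: "f (a - b) = f a - f b" if "a \<in> A" "b \<in> A" for a b
  proof -
    have "a - b \<in> A" using that lid_diff[OF A] by blast
    then have "f (a - b + b) = f (a - b) + f b" using f1 that by blast
    then show ?thesis by (simp add: algebra_simps)
  qed
  have fA: "f a \<in> A'" if "a \<in> A" for a using f3 that by blast
  show ?thesis unfolding lie_mod_iso_def
  proof (rule exI[of _ g], intro conjI)
    show "\<forall>a\<in>A'. \<forall>b\<in>A'. g (a + b) = g a + g b" using g1 by simp
    show "\<forall>c. \<forall>a\<in>A'. g (scale c a) = scale c (g a)" using g2 by simp
    show "g ` A' \<subseteq> A" using g3 by blast
    show "\<forall>a\<in>A'. g a \<in> B \<longleftrightarrow> a \<in> B'"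
    proof
      fix a assume a: "a \<in> A'"
      have ga: "g a \<in> A" "a - f (g a) \<in> B'" using g3 a by auto
      have "a \<in> B' \<longleftrightarrow> f (g a) \<in> B'"
      proof
        assume "a \<in> B'"
        then have "a - (a - f (g a)) \<in> B'" using ga lid_diff[OF B'] by blast
        then show "f (g a) \<in> B'" by simp
      next
        assume "f (g a) \<in> B'"
        then have "(a - f (g a)) + f (g a) \<in> B'" using ga lid_add[OF B'] by blast
        then show "a \<in> B'" by simp
      qed
      then show "g a \<in> B \<longleftrightarrow> a \<in> B'" using f4 ga by blast
    qed
    show "\<forall>a\<in>A. \<exists>a'\<in>A'. a - g a' \<in> B"
    proof
      fix a assume a: "a \<in> A"
      have gfa: "g (f a) \<in> A" "f a - f (g (f a)) \<in> B'" using g3 fA[OF a] by auto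
      have d: "a - g (f a) \<in> A" using a gfa lid_diff[OF A] by blast
      have "f (a - g (f a)) \<in> B'" using fdiff[OF a gfa(1)] gfa(2) by simp
      then have "a - g (f a) \<in> B" using f4 d by blast
      then show "\<exists>a'\<in>A'. a - g a' \<in> B" using fA[OF a] by blast
    qed
    show "\<forall>x. \<forall>a\<in>A'. br x (g a) - g (br x a) \<in> B"
    proof (intro allI ballI)
      fix x a assume a: "a \<in> A'"
      have ga: "g a \<in> A" "a - f (g a) \<in> B'" using g3 a by auto
      have xa: "br x a \<in> A'" using lid_l[OF A' a] .
      have gxa: "g (br x a) \<in> A" "br x a - f (g (br x a)) \<in> B'" using g3 xa by auto
      have m1: "br x (g a) \<in> A" using lid_l[OF A ga(1)] .
      have d: "br x (g a) - g (br x a) \<in> A" using m1 gxa lid_diff[OF A] by blast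
      have 1: "f (br x (g a)) - br x (f (g a)) \<in> B'"
      proof -
        have "br x (f (g a)) - f (br x (g a)) \<in> B'" using f6 ga by blast
        then have "- (br x (f (g a)) - f (br x (g a))) \<in> B'" using lid_neg[OF B'] by blast
        then show ?thesis by simp
      qed
      have 2: "br x (f (g a)) - br x a \<in> B'"
      proof -
        have "f (g a) - a \<in> B'" using ga(2) lid_neg[OF B'] by (metis minus_diff_eq)
        then have "br x (f (g a) - a) \<in> B'" using lid_l[OF B'] by blast
        then show ?thesis by (simp add: br_diffr)
      qed
      have "(f (br x (g a)) - br x (f (g a))) + (br x (f (g a)) - br x a) + (br x a - f (g (br x a))) \<in> B'"
        using 1 2 gxa(2) lid_add[OF B'] by blast
      then have "f (br x (g a)) - f (g (br x a)) \<in> B'" by simp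
      then have "f (br x (g a) - g (br x a)) \<in> B'" using fdiff[OF m1 gxa(1)] by simp
      then show "br x (g a) - g (br x a) \<in> B" using f4 d by blast
    qed
  qed
qed

lemma iso_cent:
  assumes A: "lid A" and A': "lid A'" and B': "lid B'"
    and i1: "lie_mod_iso scale br A B A' B'"
  shows "cent A B = cent A' B'"
proof -
  from i1 obtain f where
        f3: "f ` A \<subseteq> A'"
    and f4: "\<forall>a\<in>A. f a \<in> B' \<longleftrightarrow> a \<in> B" and f5: "\<forall>a'\<in>A'. \<exists>a\<in>A. a' - f a \<in> B'"
    and f6: "\<forall>x. \<forall>a\<in>A. br x (f a) - f (br x a) \<in> B'"
    unfolding lie_mod_iso_def by blast
  show ?thesis
  proof
    show "cent A B \<subseteq> cent A' B'"
    proof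
      fix x assume x: "x \<in> cent A B"
      show "x \<in> cent A' B'" unfolding cent_def mem_Collect_eq
      proof
        fix a' assume a': "a' \<in> A'"
        then obtain a where a: "a \<in> A" "a' - f a \<in> B'" using f5 by blast
        have 1: "br x (a' - f a) \<in> B'" using lid_l[OF B' a(2)] .
        have "br x a \<in> B" using x a unfolding cent_def by blast
        moreover have "br x a \<in> A" using lid_l[OF A a(1)] .
        ultimately have 2: "f (br x a) \<in> B'" using f4 by blast
        have 3: "br x (f a) - f (br x a) \<in> B'" using f6 a by blast
        have "br x (a' - f a) + (br x (f a) - f (br x a)) + f (br x a) \<in> B'"
          using 1 2 3 lid_add[OF B'] by blast
        then show "br x a' \<in> B'" by (simp add: br_diffr)
      qed
    qed
  next
    show "cent A' B' \<subseteq> cent A B"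
    proof
      fix x assume x: "x \<in> cent A' B'"
      show "x \<in> cent A B" unfolding cent_def mem_Collect_eq
      proof
        fix a assume a: "a \<in> A"
        have fa: "f a \<in> A'" using f3 a by blast
        have 1: "br x (f a) \<in> B'" using x fa unfolding cent_def by blast
        have 3: "br x (f a) - f (br x a) \<in> B'" using f6 a by blast
        have "br x (f a) - (br x (f a) - f (br x a)) \<in> B'" using 1 3 lid_diff[OF B'] by blast
        then have "f (br x a) \<in> B'" by simp
        moreover have "br x a \<in> A" using lid_l[OF A a] .
        ultimately show "br x a \<in> B" using f4 by blast
      qed
    qed
  qed
qed

definition ssum :: "'v set \<Rightarrow> 'v set \<Rightarrow> 'v set" where
  "ssum U V = {u + v | u v. u \<in> U \<and> v \<in> V}"

lemma ssum_sub:
  assumes U: "subspace U" and V: "subspace V"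
  shows "subspace (ssum U V)"
proof (rule subspaceI)
  show "0 \<in> ssum U V" unfolding ssum_def using subspace_0[OF U] subspace_0[OF V] by force
next
  fix x y assume "x \<in> ssum U V" "y \<in> ssum U V"
  then obtain u1 v1 u2 v2 where "x = u1 + v1" "y = u2 + v2" "u1 \<in> U" "v1 \<in> V" "u2 \<in> U" "v2 \<in> V"
    unfolding ssum_def by blast
  moreover have "x + y = (u1 + u2) + (v1 + v2)" using calculation by (simp add: algebra_simps)
  ultimately show "x + y \<in> ssum U V" unfolding ssum_def using subspace_add[OF U] subspace_add[OF V] by blast
next
  fix c x assume "x \<in> ssum U V"
  then obtain u1 v1 where "x = u1 + v1" "u1 \<in> U" "v1 \<in> V" unfolding ssum_def by blast
  moreover have "scale c x = scale c u1 + scale c v1" using calculation by (simp add: scale_right_distrib)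
  ultimately show "scale c x \<in> ssum U V" unfolding ssum_def using subspace_scale[OF U] subspace_scale[OF V] by blast
qed

lemma ssum_lid:
  assumes U: "lid U" and V: "lid V"
  shows "lid (ssum U V)"
  unfolding lie_ideal_def
proof (intro conjI allI impI)
  show "subspace (ssum U V)" using ssum_sub lid_sub U V by blast
  fix x a assume "a \<in> ssum U V"
  then obtain u v where uv: "a = u + v" "u \<in> U" "v \<in> V" unfolding ssum_def by blast
  have "br x u \<in> U" "br x v \<in> V" using lid_l[OF U uv(2)] lid_l[OF V uv(3)] by auto
  then have "br x u + br x v \<in> ssum U V" unfolding ssum_def by blast
  then show "br x a \<in> ssum U V" using uv by (simp add: br_addr)
qed

lemma ssumI: "u \<in> U \<Longrightarrow> v \<in> V \<Longrightarrow> u + v \<in> ssum U V" unfolding ssum_def by blast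
lemma ssumE: "x \<in> ssum U V \<Longrightarrow> (\<And>u v. u \<in> U \<Longrightarrow> v \<in> V \<Longrightarrow> x = u + v \<Longrightarrow> P) \<Longrightarrow> P"
  unfolding ssum_def by blast

lemma mono_chief:
  assumes ch: "chief_factor scale br A B" and J: "lid J" and nJ: "\<not> J \<subseteq> cent A B"
  shows "A \<subseteq> ssum J B"
proof -
  have A: "lid A" and B: "lid B" and BA: "B \<subset> A"
    and nc: "\<not> (\<exists>C. lid C \<and> B \<subset> C \<and> C \<subset> A)" using ch unfolding chief_factor_def by blast+
  from nJ obtain j a0 where j: "j \<in> J" "a0 \<in> A" "br j a0 \<notin> B" unfolding cent_def by blast
  define K where "K = ssum (J \<inter> A) B"
  have K: "lid K" unfolding K_def using ssum_lid lid_int J A B by blast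
  have BK: "B \<subseteq> K" unfolding K_def using ssumI[of 0 "J \<inter> A"] lid_0[OF J] lid_0[OF A] by fastforce
  have KA: "K \<subseteq> A" unfolding K_def using BA lid_add[OF A] by (auto elim!: ssumE)
  have "br j a0 \<in> K" unfolding K_def using ssumI[of "br j a0" "J \<inter> A" 0 B] lid_r[OF J j(1)] lid_l[OF A j(2)] lid_0[OF B] by simp
  then have "B \<subset> K" using BK j(3) by blast
  then have "K = A" using nc K KA by blast
  then have "A \<subseteq> ssum (J \<inter> A) B" unfolding K_def by simp
  also have "ssum (J \<inter> A) B \<subseteq> ssum J B" unfolding ssum_def by blast
  finally show ?thesis .
qed

lemma min_chief: "minimal_ideal_over scale br N E \<Longrightarrow> lid N \<Longrightarrow> chief_factor scale br E N"
  unfolding minimal_ideal_over_def chief_factor_def by blast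

end


context lie
begin

definition t3data where
  "t3data N M E1 E2 \<longleftrightarrow> lid N \<and> lie_subalgebra scale br M \<and> N \<subseteq> M
     \<and> (\<forall>S. lie_subalgebra scale br S \<and> M \<subseteq> S \<longrightarrow> S = M \<or> S = UNIV)
     \<and> (\<forall>I. lid I \<and> N \<subseteq> I \<and> I \<subseteq> M \<longrightarrow> I = N)
     \<and> minimal_ideal_over scale br N E1 \<and> minimal_ideal_over scale br N E2 \<and> E1 \<noteq> E2"

lemma t3_sym: "t3data N M E1 E2 \<Longrightarrow> t3data N M E2 E1" unfolding t3data_def by blast

lemma sub_sub: "lie_subalgebra scale br M \<Longrightarrow> subspace M" unfolding lie_subalgebra_def by blast
lemma sub_br: "lie_subalgebra scale br M \<Longrightarrow> a \<in> M \<Longrightarrow> b \<in> M \<Longrightarrow> br a b \<in> M"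
  unfolding lie_subalgebra_def by blast

lemma t3_int:
  assumes t: "t3data N M E1 E2" shows "E1 \<inter> E2 = N"
proof -
  have N: "lid N" and m1: "minimal_ideal_over scale br N E1" and m2: "minimal_ideal_over scale br N E2"
    and ne: "E1 \<noteq> E2" using t unfolding t3data_def by blast+
  have E1: "lid E1" "N \<subset> E1" "\<not> (\<exists>C. lid C \<and> N \<subset> C \<and> C \<subset> E1)" using m1 unfolding minimal_ideal_over_def by blast+
  have E2: "lid E2" "N \<subset> E2" "\<not> (\<exists>C. lid C \<and> N \<subset> C \<and> C \<subset> E2)" using m2 unfolding minimal_ideal_over_def by blast+
  have I: "lid (E1 \<inter> E2)" using lid_int E1 E2 by blast
  have "E1 \<inter> E2 \<noteq> E1"
  proof
    assume "E1 \<inter> E2 = E1"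
    then have "E1 \<subseteq> E2" by blast
    then show False using E1 E2 ne by blast
  qed
  then show ?thesis using I E1 E2 by blast
qed

lemma t3_sum:
  assumes t: "t3data N M E1 E2" shows "ssum M E1 = UNIV"
proof -
  have N: "lid N" and M: "lie_subalgebra scale br M" and NM: "N \<subseteq> M"
    and mx: "\<forall>S. lie_subalgebra scale br S \<and> M \<subseteq> S \<longrightarrow> S = M \<or> S = UNIV"
    and core: "\<forall>I. lid I \<and> N \<subseteq> I \<and> I \<subseteq> M \<longrightarrow> I = N"
    and m1: "minimal_ideal_over scale br N E1" using t unfolding t3data_def by blast+
  have E1: "lid E1" "N \<subset> E1" using m1 unfolding minimal_ideal_over_def by blast+
  have S: "lie_subalgebra scale br (ssum M E1)" unfolding lie_subalgebra_def
  proof (intro conjI ballI)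
    show "subspace (ssum M E1)" using ssum_sub sub_sub[OF M] lid_sub[OF E1(1)] by blast
    fix a b assume "a \<in> ssum M E1" "b \<in> ssum M E1"
    then obtain m1 e1 m2 e2 where *: "m1 \<in> M" "e1 \<in> E1" "a = m1 + e1" "m2 \<in> M" "e2 \<in> E1" "b = m2 + e2"
      by (auto elim!: ssumE)
    have "br a b = br m1 m2 + (br m1 e2 + br e1 m2 + br e1 e2)" using * by (simp add: br_addl br_addr algebra_simps)
    moreover have "br m1 e2 + br e1 m2 + br e1 e2 \<in> E1"
      using * lid_l[OF E1(1)] lid_r[OF E1(1)] lid_add[OF E1(1)] by metis
    ultimately show "br a b \<in> ssum M E1" using ssumI sub_br[OF M *(1,4)] by metis
  qed
  have MS: "M \<subseteq> ssum M E1" using ssumI[of _ M 0 E1] lid_0[OF E1(1)] by force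
  have "ssum M E1 \<noteq> M"
  proof
    assume "ssum M E1 = M"
    then have "E1 \<subseteq> M" using ssumI[of 0 M _ E1] subspace_0[OF sub_sub[OF M]] by force
    then have "E1 = N" using core E1 by blast
    then show False using E1 by blast
  qed
  then show ?thesis using mx S MS by blast
qed

lemma t3_cap:
  assumes t: "t3data N M E1 E2" shows "M \<inter> E1 = N"
proof -
  have N: "lid N" and M: "lie_subalgebra scale br M" and NM: "N \<subseteq> M"
    and core: "\<forall>I. lid I \<and> N \<subseteq> I \<and> I \<subseteq> M \<longrightarrow> I = N"
    and m1: "minimal_ideal_over scale br N E1" and m2: "minimal_ideal_over scale br N E2"
    using t unfolding t3data_def by blast+
  have E1: "lid E1" "N \<subset> E1" using m1 unfolding minimal_ideal_over_def by blast+
  have E2: "lid E2" "N \<subset> E2" using m2 unfolding minimal_ideal_over_def by blast+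
  have int: "E1 \<inter> E2 = N" using t3_int[OF t] .
  have sum2: "ssum M E2 = UNIV" using t3_sum[OF t3_sym[OF t]] .
  have "lid (M \<inter> E1)" unfolding lie_ideal_def
  proof (intro conjI allI impI)
    show "subspace (M \<inter> E1)" using subspace_inter sub_sub[OF M] lid_sub[OF E1(1)] by blast
    fix x a assume a: "a \<in> M \<inter> E1"
    have "x \<in> ssum M E2" using sum2 by simp
    then obtain m e where me: "m \<in> M" "e \<in> E2" "x = m + e" by (auto elim!: ssumE)
    have 1: "br m a \<in> M \<inter> E1" using sub_br[OF M me(1)] a lid_l[OF E1(1)] by blast
    have "br e a \<in> E1 \<inter> E2" using br_both[OF E2(1) E1(1) me(2)] a by blast
    then have 2: "br e a \<in> M \<inter> E1" using int NM E1(2) by blast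
    have "br m a + br e a \<in> M \<inter> E1" using 1 2 subspace_add[OF sub_sub[OF M]] lid_add[OF E1(1)] by blast
    then show "br x a \<in> M \<inter> E1" using me by (simp add: br_addl)
  qed
  moreover have "N \<subseteq> M \<inter> E1" using NM E1 by blast
  ultimately show ?thesis using core by blast
qed

lemma t3_cent:
  assumes t: "t3data N M E1 E2" shows "cent E1 N = E2"
proof -
  have N: "lid N" and M: "lie_subalgebra scale br M" and NM: "N \<subseteq> M"
    and core: "\<forall>I. lid I \<and> N \<subseteq> I \<and> I \<subseteq> M \<longrightarrow> I = N"
    and m1: "minimal_ideal_over scale br N E1" and m2: "minimal_ideal_over scale br N E2"
    using t unfolding t3data_def by blast+
  have E1: "lid E1" "N \<subset> E1" using m1 unfolding minimal_ideal_over_def by blast+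
  have E2: "lid E2" "N \<subset> E2" using m2 unfolding minimal_ideal_over_def by blast+
  have int: "E1 \<inter> E2 = N" using t3_int[OF t] .
  have sum1: "ssum M E1 = UNIV" using t3_sum[OF t] .
  have sum2: "ssum M E2 = UNIV" using t3_sum[OF t3_sym[OF t]] .
  define C where "C = cent E1 N"
  have C: "lid C" unfolding C_def using cent_lid E1 N by blast
  have E2C: "E2 \<subseteq> C" unfolding C_def cent_def using br_both[OF E2(1) E1(1)] int by blast
  have NC: "N \<subseteq> C" unfolding C_def cent_def using lid_r[OF N] by blast
  have "lid (C \<inter> M)" unfolding lie_ideal_def
  proof (intro conjI allI impI)
    show "subspace (C \<inter> M)" using subspace_inter sub_sub[OF M] lid_sub[OF C] by blast
    fix x c assume c: "c \<in> C \<inter> M"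
    have "x \<in> ssum M E1" using sum1 by simp
    then obtain m e where me: "m \<in> M" "e \<in> E1" "x = m + e" by (auto elim!: ssumE)
    have 1: "br m c \<in> C \<inter> M" using sub_br[OF M me(1)] c lid_l[OF C] by blast
    have "br c e \<in> N" using c me(2) unfolding C_def cent_def by blast
    then have "- br c e \<in> N" using lid_neg[OF N] by blast
    then have "br e c \<in> N" using br_anti[of e c] by simp
    then have 2: "br e c \<in> C \<inter> M" using NC NM by blast
    have "br m c + br e c \<in> C \<inter> M" using 1 2 subspace_add[OF sub_sub[OF M]] lid_add[OF C] by blast
    then show "br x c \<in> C \<inter> M" using me by (simp add: br_addl)
  qed
  then have CM: "C \<inter> M = N" using core NC NM by blast
  have "C \<subseteq> E2"
  proof
    fix c assume c: "c \<in> C"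
    have "c \<in> ssum M E2" using sum2 by simp
    then obtain m e where me: "m \<in> M" "e \<in> E2" "c = m + e" by (auto elim!: ssumE)
    have "m = c - e" using me by simp
    then have "m \<in> C" using c E2C me(2) lid_diff[OF C] by blast
    then have "m \<in> E2" using CM me(1) E2 by blast
    then show "c \<in> E2" using me lid_add[OF E2(1)] by blast
  qed
  then show ?thesis using E2C unfolding C_def by blast
qed

end


context lie
begin

lemma ssum_comm: "ssum U V = ssum V U"
proof -
  have "ssum U V \<subseteq> ssum V U" for U V
  proof
    fix x assume "x \<in> ssum U V"
    then obtain u v where "u \<in> U" "v \<in> V" "x = u + v" unfolding ssum_def by blast
    moreover then have "x = v + u" by (simp add: add.commute)
    ultimately show "x \<in> ssum V U" unfolding ssum_def by blast
  qed
  then show ?thesis by blast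
qed
lemma ssum_mono: "U \<subseteq> U' \<Longrightarrow> V \<subseteq> V' \<Longrightarrow> ssum U V \<subseteq> ssum U' V'" unfolding ssum_def by blast
lemma ssum_in: "lid J \<Longrightarrow> U \<subseteq> J \<Longrightarrow> V \<subseteq> J \<Longrightarrow> ssum U V \<subseteq> J"
  unfolding ssum_def using lid_add by blast
lemma ssum_get: "x \<in> X \<Longrightarrow> X \<subseteq> ssum U V \<Longrightarrow> \<exists>u\<in>U. \<exists>v\<in>V. x = u + v"
  unfolding ssum_def by blast

lemma second_iso:
  assumes U: "lid U" and W: "lid W" and R: "lid R"
    and UW: "U \<subseteq> ssum W R" and WU: "W \<subseteq> ssum U R"
  shows "lie_mod_iso scale br U (U \<inter> R) W (W \<inter> R)"
proof -
  have cov: "\<forall>u\<in>U. \<exists>w\<in>W. u - w \<in> R"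
  proof
    fix u assume "u \<in> U"
    then obtain w r where "w \<in> W" "r \<in> R" "u = w + r" using ssum_get UW by blast
    then show "\<exists>w\<in>W. u - w \<in> R" by force
  qed
  obtain g where g1: "\<forall>x y. g (x + y) = g x + g y" and g2: "\<forall>c x. g (scale c x) = scale c (g x)"
    and g3: "\<forall>u\<in>U. g u \<in> W \<and> u - g u \<in> R"
    using section_exists[OF vs lid_sub[OF U] lid_sub[OF W] lid_sub[OF R], of "\<lambda>x. x"] cov by auto
  show ?thesis unfolding lie_mod_iso_def
  proof (rule exI[of _ g], intro conjI)
    show "\<forall>a\<in>U. \<forall>b\<in>U. g (a + b) = g a + g b" using g1 by simp
    show "\<forall>c. \<forall>a\<in>U. g (scale c a) = scale c (g a)" using g2 by simp
    show "g ` U \<subseteq> W" using g3 by blast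
    show "\<forall>a\<in>U. g a \<in> W \<inter> R \<longleftrightarrow> a \<in> U \<inter> R"
    proof
      fix a assume a: "a \<in> U"
      have ga: "g a \<in> W" "a - g a \<in> R" using g3 a by auto
      have "a \<in> R \<longleftrightarrow> g a \<in> R"
      proof
        assume "a \<in> R" then have "a - (a - g a) \<in> R" using ga lid_diff[OF R] by blast
        then show "g a \<in> R" by simp
      next
        assume "g a \<in> R" then have "(a - g a) + g a \<in> R" using ga lid_add[OF R] by blast
        then show "a \<in> R" by simp
      qed
      then show "g a \<in> W \<inter> R \<longleftrightarrow> a \<in> U \<inter> R" using a ga by blast
    qed
    show "\<forall>a'\<in>W. \<exists>a\<in>U. a' - g a \<in> W \<inter> R"
    proof
      fix w assume w: "w \<in> W"
      then obtain u r where ur: "u \<in> U" "r \<in> R" "w = u + r" using ssum_get WU by blast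
      have gu: "g u \<in> W" "u - g u \<in> R" using g3 ur by auto
      have e: "w - g u = r + (u - g u)" using ur by (simp add: algebra_simps)
      have "r + (u - g u) \<in> R" using ur gu lid_add[OF R] by blast
      then have "w - g u \<in> R" unfolding e .
      moreover have "w - g u \<in> W" using w gu lid_diff[OF W] by blast
      ultimately show "\<exists>a\<in>U. w - g a \<in> W \<inter> R" using ur by blast
    qed
    show "\<forall>x. \<forall>a\<in>U. br x (g a) - g (br x a) \<in> W \<inter> R"
    proof (intro allI ballI)
      fix x a assume a: "a \<in> U"
      have ga: "g a \<in> W" "a - g a \<in> R" using g3 a by auto
      have xa: "br x a \<in> U" using lid_l[OF U a] .
      have gxa: "g (br x a) \<in> W" "br x a - g (br x a) \<in> R" using g3 xa by auto
      have "br x (g a) - g (br x a) \<in> W" using lid_l[OF W ga(1)] gxa lid_diff[OF W] by blast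
      moreover
      have "g a - a \<in> R" using ga(2) lid_neg[OF R] by (metis minus_diff_eq)
      then have "br x (g a - a) \<in> R" using lid_l[OF R] by blast
      then have "br x (g a - a) + (br x a - g (br x a)) \<in> R" using gxa lid_add[OF R] by blast
      then have "br x (g a) - g (br x a) \<in> R" by (simp add: br_diffr)
      ultimately show "br x (g a) - g (br x a) \<in> W \<inter> R" by blast
    qed
  qed
qed

end


context lie
begin

lemma t3_trans:
  assumes t: "t3data N M X P" and t': "t3data N' M' Q X"
    and nX: "nonabelian_over br N X" and nX': "nonabelian_over br N' X"
    and PQ: "P \<noteq> Q"
  shows "quotient_primitive_type3 scale br (P \<inter> Q) \<and> Q \<noteq> P
     \<and> minimal_ideal_over scale br (P \<inter> Q) Q \<and> minimal_ideal_over scale br (P \<inter> Q) P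
     \<and> lie_mod_iso scale br Q (P \<inter> Q) X N \<and> lie_mod_iso scale br P (P \<inter> Q) X N'"
proof -
  have N: "lid N" and M: "lie_subalgebra scale br M" and NM: "N \<subseteq> M"
    and mX: "minimal_ideal_over scale br N X" and mP: "minimal_ideal_over scale br N P"
    using t unfolding t3data_def by blast+
  have N': "lid N'" and M': "lie_subalgebra scale br M'" and NM': "N' \<subseteq> M'"
    and mQ: "minimal_ideal_over scale br N' Q" and mX': "minimal_ideal_over scale br N' X"
    using t' unfolding t3data_def by blast+
  have X: "lid X" "N \<subset> X" using mX unfolding minimal_ideal_over_def by blast+
  have P: "lid P" "N \<subset> P" using mP unfolding minimal_ideal_over_def by blast+
  have Q: "lid Q" "N' \<subset> Q" using mQ unfolding minimal_ideal_over_def by blast+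
  have X': "N' \<subset> X" using mX' unfolding minimal_ideal_over_def by blast+
  have XP: "X \<inter> P = N" using t3_int[OF t] .
  have QX: "Q \<inter> X = N'" using t3_int[OF t'] .
  have cX: "cent X N = P" using t3_cent[OF t] .
  have cX': "cent X N' = Q" using t3_cent[OF t3_sym[OF t']] .
  have cP: "cent P N = X" using t3_cent[OF t3_sym[OF t]] .
  have cQ: "cent Q N' = X" using t3_cent[OF t'] .
  have chX: "chief_factor scale br X N" using min_chief[OF mX N] .
  have chX': "chief_factor scale br X N'" using min_chief[OF mX' N'] .
  have chP: "chief_factor scale br P N" using min_chief[OF mP N] .
  have chQ: "chief_factor scale br Q N'" using min_chief[OF mQ N'] .
  have MonoP: "X \<subseteq> ssum J N" if "lid J" "\<not> J \<subseteq> P" for J using mono_chief[OF chX that(1)] that(2) cX by simp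
  have MonoQ: "X \<subseteq> ssum J N'" if "lid J" "\<not> J \<subseteq> Q" for J using mono_chief[OF chX' that(1)] that(2) cX' by simp
  have MonoPX: "P \<subseteq> ssum J N" if "lid J" "\<not> J \<subseteq> X" for J using mono_chief[OF chP that(1)] that(2) cP by simp
  have MonoQX: "Q \<subseteq> ssum J N'" if "lid J" "\<not> J \<subseteq> X" for J using mono_chief[OF chQ that(1)] that(2) cQ by simp
  have NP: "N \<subseteq> P" using P by blast
  have NX: "N \<subseteq> X" using X by blast
  have N'Q: "N' \<subseteq> Q" using Q by blast
  have N'X: "N' \<subseteq> X" using X' by blast
  obtain a1 b1 where ab1: "a1 \<in> X" "b1 \<in> X" "br a1 b1 \<notin> N" using nX unfolding nonabelian_over_def by blast
  obtain a3 b3 where ab3: "a3 \<in> X" "b3 \<in> X" "br a3 b3 \<notin> N'" using nX' unfolding nonabelian_over_def by blast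
  have nPQ: "\<not> P \<subseteq> Q"
  proof
    assume PQs: "P \<subseteq> Q"
    then have "\<not> Q \<subseteq> P" using PQ by blast
    then have "X \<subseteq> ssum Q N" using MonoP Q by blast
    also have "\<dots> \<subseteq> Q" using ssum_in[OF Q(1)] NP PQs by blast
    finally have "X \<subseteq> N'" using QX by blast
    then show False using X' by blast
  qed
  have nQP: "\<not> Q \<subseteq> P"
  proof
    assume QPs: "Q \<subseteq> P"
    then have "\<not> P \<subseteq> Q" using PQ by blast
    then have "X \<subseteq> ssum P N'" using MonoQ P by blast
    also have "\<dots> \<subseteq> P" using ssum_in[OF P(1)] N'Q QPs by blast
    finally have "X \<subseteq> N" using XP by blast
    then show False using X by blast
  qed
  have XPQ: "X \<subseteq> ssum P Q" using MonoQ[OF P(1) nPQ] ssum_mono[OF _ N'Q, of P P] by blast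
  have nQX: "\<not> Q \<subseteq> X" using QX Q by blast
  have nPX: "\<not> P \<subseteq> X" using XP P by blast
  have PXQ: "P \<subseteq> ssum X Q" using MonoPX[OF Q(1) nQX] ssum_mono[OF _ NX, of Q Q] ssum_comm[of Q X] by blast
  have QXP: "Q \<subseteq> ssum X P" using MonoQX[OF P(1) nPX] ssum_mono[OF _ N'X, of P P] ssum_comm[of P X] by blast
  have PQl: "lid (P \<inter> Q)" using lid_int P Q by blast
  have iso1: "lie_mod_iso scale br Q (P \<inter> Q) X N"
  proof -
    have "lie_mod_iso scale br Q (Q \<inter> P) X (X \<inter> P)"
    proof -
      have "X \<subseteq> ssum Q P" using XPQ ssum_comm[of P Q] by simp
      then show ?thesis using second_iso[OF Q(1) X(1) P(1) QXP] by blast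
    qed
    then show ?thesis using XP by (simp add: Int_commute)
  qed
  have iso2: "lie_mod_iso scale br P (P \<inter> Q) X N'"
  proof -
    have "lie_mod_iso scale br P (P \<inter> Q) X (X \<inter> Q)"
      using second_iso[OF P(1) X(1) Q(1) PXQ XPQ] .
    then show ?thesis using QX by (simp add: Int_commute)
  qed
  have MX: "M \<inter> X = N" using t3_cap[OF t] .
  have MP: "M \<inter> P = N" using t3_cap[OF t3_sym[OF t]] .
  have M'Q: "M' \<inter> Q = N'" using t3_cap[OF t'] .
  have M'X: "M' \<inter> X = N'" using t3_cap[OF t3_sym[OF t']] .
  have sMX: "ssum M X = UNIV" using t3_sum[OF t] .
  have sMP: "ssum M P = UNIV" using t3_sum[OF t3_sym[OF t]] .
  have sM'Q: "ssum M' Q = UNIV" using t3_sum[OF t'] .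
  have sM'X: "ssum M' X = UNIV" using t3_sum[OF t3_sym[OF t']] .
  have Msub: "subspace M" using sub_sub[OF M] .
  have M'sub: "subspace M'" using sub_sub[OF M'] .
  define Mpp where "Mpp = {x. \<exists>m\<in>M. \<exists>m'\<in>M'. x - m \<in> P \<and> m - m' \<in> X \<and> m' - x \<in> Q}"
  have Mppsub: "lie_subalgebra scale br Mpp" unfolding lie_subalgebra_def
  proof (intro conjI ballI)
    show "subspace Mpp"
    proof (rule subspaceI)
      have "(0::'v) - 0 \<in> P" "(0::'v) - 0 \<in> X" "(0::'v) - 0 \<in> Q" using lid_0 P(1) X(1) Q(1) by simp_all
      then show "0 \<in> Mpp" unfolding Mpp_def using subspace_0[OF Msub] subspace_0[OF M'sub] by blast
    next
      fix x y assume "x \<in> Mpp" "y \<in> Mpp"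
      then obtain m1 m1' m2 m2' where w: "m1 \<in> M" "m1' \<in> M'" "x - m1 \<in> P" "m1 - m1' \<in> X" "m1' - x \<in> Q"
        "m2 \<in> M" "m2' \<in> M'" "y - m2 \<in> P" "m2 - m2' \<in> X" "m2' - y \<in> Q" unfolding Mpp_def by blast
      have e: "x + y - (m1 + m2) = (x - m1) + (y - m2)" "m1 + m2 - (m1' + m2') = (m1 - m1') + (m2 - m2')"
        "m1' + m2' - (x + y) = (m1' - x) + (m2' - y)" by (simp_all add: algebra_simps)
      have 1: "x + y - (m1 + m2) \<in> P" unfolding e(1) by (rule lid_add[OF P(1) w(3) w(8)])
      have 2: "m1 + m2 - (m1' + m2') \<in> X" unfolding e(2) by (rule lid_add[OF X(1) w(4) w(9)])
      have 3: "m1' + m2' - (x + y) \<in> Q" unfolding e(3) by (rule lid_add[OF Q(1) w(5) w(10)])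
      show "x + y \<in> Mpp" unfolding Mpp_def
        using 1 2 3 subspace_add[OF Msub w(1) w(6)] subspace_add[OF M'sub w(2) w(7)] by blast
    next
      fix c x assume "x \<in> Mpp"
      then obtain m1 m1' where w: "m1 \<in> M" "m1' \<in> M'" "x - m1 \<in> P" "m1 - m1' \<in> X" "m1' - x \<in> Q"
        unfolding Mpp_def by blast
      have e: "scale c x - scale c m1 = scale c (x - m1)" "scale c m1 - scale c m1' = scale c (m1 - m1')"
        "scale c m1' - scale c x = scale c (m1' - x)" by (simp_all add: scale_right_diff_distrib)
      have 1: "scale c x - scale c m1 \<in> P" unfolding e(1) by (rule subspace_scale[OF lid_sub[OF P(1)] w(3)])
      have 2: "scale c m1 - scale c m1' \<in> X" unfolding e(2) by (rule subspace_scale[OF lid_sub[OF X(1)] w(4)])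
      have 3: "scale c m1' - scale c x \<in> Q" unfolding e(3) by (rule subspace_scale[OF lid_sub[OF Q(1)] w(5)])
      show "scale c x \<in> Mpp" unfolding Mpp_def
        using 1 2 3 subspace_scale[OF Msub w(1)] subspace_scale[OF M'sub w(2)] by blast
    qed
  next
    fix x y assume "x \<in> Mpp" "y \<in> Mpp"
    then obtain m1 m1' m2 m2' where w: "m1 \<in> M" "m1' \<in> M'" "x - m1 \<in> P" "m1 - m1' \<in> X" "m1' - x \<in> Q"
      "m2 \<in> M" "m2' \<in> M'" "y - m2 \<in> P" "m2 - m2' \<in> X" "m2' - y \<in> Q" unfolding Mpp_def by blast
    have "br x y - br m1 m2 \<in> P" using br_cong[OF P(1)] w by blast
    moreover have "br m1 m2 - br m1' m2' \<in> X" using br_cong[OF X(1)] w by blast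
    moreover have "br m1' m2' - br x y \<in> Q" using br_cong[OF Q(1)] w by blast
    moreover have "br m1 m2 \<in> M" using sub_br[OF M] w by blast
    moreover have "br m1' m2' \<in> M'" using sub_br[OF M'] w by blast
    ultimately show "br x y \<in> Mpp" unfolding Mpp_def by blast
  qed
  have Mppsp: "subspace Mpp" using sub_sub[OF Mppsub] .
  have MppP: "Mpp \<inter> P \<subseteq> Q"
  proof
    fix x assume "x \<in> Mpp \<inter> P"
    then obtain m m' where w: "x \<in> P" "m \<in> M" "m' \<in> M'" "x - m \<in> P" "m - m' \<in> X" "m' - x \<in> Q"
      unfolding Mpp_def by blast
    have "x - (x - m) \<in> P" using w lid_diff[OF P(1)] by blast
    then have "m \<in> N" using w MP by auto
    then have "m - (m - m') \<in> X" using w NX lid_diff[OF X(1)] by blast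
    then have "m' \<in> N'" using w M'X by auto
    then have "m' - (m' - x) \<in> Q" using w N'Q lid_diff[OF Q(1)] by blast
    then show "x \<in> Q" by simp
  qed
  have MppQ: "Mpp \<inter> Q \<subseteq> P"
  proof
    fix x assume "x \<in> Mpp \<inter> Q"
    then obtain m m' where w: "x \<in> Q" "m \<in> M" "m' \<in> M'" "x - m \<in> P" "m - m' \<in> X" "m' - x \<in> Q"
      unfolding Mpp_def by blast
    have "(m' - x) + x \<in> Q" using w lid_add[OF Q(1)] by blast
    then have "m' \<in> N'" using w M'Q by auto
    then have "(m - m') + m' \<in> X" using w N'X lid_add[OF X(1)] by blast
    then have "m \<in> N" using w MX by auto
    then have "(x - m) + m \<in> P" using w NP lid_add[OF P(1)] by blast
    then show "x \<in> P" by simp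
  qed
  have NMpp: "P \<inter> Q \<subseteq> Mpp"
  proof
    fix x assume x: "x \<in> P \<inter> Q"
    have "x - 0 \<in> P" "0 - 0 \<in> X" "0 - x \<in> Q" using x lid_0[OF X(1)] lid_neg[OF Q(1)] by auto
    then show "x \<in> Mpp" unfolding Mpp_def using subspace_0[OF Msub] subspace_0[OF M'sub] by blast
  qed
  have sumP: "\<exists>y\<in>Mpp. \<exists>p\<in>P. x = y + p" for x
  proof -
    obtain m p1 where 1: "m \<in> M" "p1 \<in> P" "x = m + p1" using ssum_get[of x UNIV M P] sMP by auto
    obtain m' x1 where 2: "m' \<in> M'" "x1 \<in> X" "m = m' + x1" using ssum_get[of m UNIV M' X] sM'X by auto
    obtain p2 q2 where 3: "p2 \<in> P" "q2 \<in> Q" "x1 = p2 + q2" using ssum_get[OF 2(2) XPQ] by auto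
    define y where "y = x - p1 - p2"
    have e: "y - m = - p2" "m - m' = x1" "m' - y = - q2" "x = y + (p1 + p2)"
      using 1 2 3 unfolding y_def by (simp_all add: algebra_simps)
    have c1: "y - m \<in> P" unfolding e(1) using lid_neg[OF P(1) 3(1)] .
    have c2: "m - m' \<in> X" unfolding e(2) using 2(2) .
    have c3: "m' - y \<in> Q" unfolding e(3) using lid_neg[OF Q(1) 3(2)] .
    have "y \<in> Mpp" unfolding Mpp_def using c1 c2 c3 1(1) 2(1) by blast
    then show ?thesis using e 1 2 3 lid_add[OF P(1)] by blast
  qed
  have sumQ: "\<exists>y\<in>Mpp. \<exists>q\<in>Q. x = y + q" for x
  proof -
    obtain m' q1 where 1: "m' \<in> M'" "q1 \<in> Q" "x = m' + q1" using ssum_get[of x UNIV M' Q] sM'Q by auto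
    obtain m x1 where 2: "m \<in> M" "x1 \<in> X" "m' = m + x1" using ssum_get[of m' UNIV M X] sMX by auto
    obtain p2 q2 where 3: "p2 \<in> P" "q2 \<in> Q" "x1 = p2 + q2" using ssum_get[OF 2(2) XPQ] by auto
    define y where "y = m' - q2"
    have e: "y - m = p2" "m - m' = - x1" "m' - y = q2" "x = y + (q1 + q2)"
      using 1 2 3 unfolding y_def by (simp_all add: algebra_simps)
    have c1: "y - m \<in> P" unfolding e(1) using 3(1) .
    have c2: "m - m' \<in> X" unfolding e(2) using lid_neg[OF X(1) 2(2)] .
    have c3: "m' - y \<in> Q" unfolding e(3) using 3(2) .
    have "y \<in> Mpp" unfolding Mpp_def using c1 c2 c3 1(1) 2(1) by blast
    then show ?thesis using e 1 2 3 lid_add[OF Q(1)] by blast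
  qed
  have maxl: "S = Mpp \<or> S = UNIV" if S: "lie_subalgebra scale br S" "Mpp \<subseteq> S" for S
  proof (cases "S = Mpp")
    case False
    then obtain s where s: "s \<in> S" "s \<notin> Mpp" using S by blast
    obtain y p where yp: "y \<in> Mpp" "p \<in> P" "s = y + p" using sumP by blast
    have Ssp: "subspace S" using sub_sub[OF S(1)] .
    have pS: "p \<in> S" using subspace_diff[OF Ssp s(1), of y] yp S(2) by auto
    have pM: "p \<notin> Mpp" using s yp subspace_add[OF Mppsp] by blast
    have pQ: "p \<notin> Q" using pM yp NMpp by blast
    define J where "J = ssum (S \<inter> P) Q"
    have Jl: "lid J" unfolding lie_ideal_def
    proof (intro conjI allI impI)
      show "subspace J" unfolding J_def using ssum_sub[OF subspace_inter[OF Ssp lid_sub[OF P(1)]] lid_sub[OF Q(1)]] .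
      fix z a assume "a \<in> J"
      then obtain s1 q1 where a: "s1 \<in> S \<inter> P" "q1 \<in> Q" "a = s1 + q1" unfolding J_def by (auto elim!: ssumE)
      obtain y1 q where z: "y1 \<in> Mpp" "q \<in> Q" "z = y1 + q" using sumQ by blast
      have e: "br z a = br y1 s1 + (br y1 q1 + br q s1 + br q q1)" using a z by (simp add: br_addl br_addr algebra_simps)
      have 1: "br y1 s1 \<in> S \<inter> P" using sub_br[OF S(1)] z(1) S(2) a(1) lid_l[OF P(1)] by blast
      have "br y1 q1 \<in> Q" using lid_l[OF Q(1) a(2)] .
      moreover have "br q s1 \<in> Q" using lid_r[OF Q(1) z(2)] .
      moreover have "br q q1 \<in> Q" using lid_l[OF Q(1) a(2)] .
      ultimately have 2: "br y1 q1 + br q s1 + br q q1 \<in> Q" using lid_add[OF Q(1)] by blast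
      show "br z a \<in> J" unfolding J_def e by (rule ssumI[OF 1 2])
    qed
    have QJ: "Q \<subseteq> J" unfolding J_def using ssumI[of 0 "S \<inter> P"] subspace_0[OF Ssp] lid_0[OF P(1)] by fastforce
    have pJ: "p \<in> J" unfolding J_def using ssumI[of p "S \<inter> P" 0 Q] pS yp lid_0[OF Q(1)] by simp
    then have "\<not> J \<subseteq> Q" using pQ by blast
    then have "X \<subseteq> ssum J N'" using MonoQ Jl by blast
    also have "\<dots> \<subseteq> J" using ssum_in[OF Jl] QJ N'Q by blast
    finally have XJ: "X \<subseteq> J" .
    have PJ: "P \<subseteq> J" using PXQ ssum_in[OF Jl XJ QJ] by blast
    have "z \<in> S" for z
    proof -
      obtain y0 p0 where 1: "y0 \<in> Mpp" "p0 \<in> P" "z = y0 + p0" using sumP by blast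
      have "p0 \<in> J" using PJ 1 by blast
      then obtain s1 q1 where 2: "s1 \<in> S \<inter> P" "q1 \<in> Q" "p0 = s1 + q1" unfolding J_def by (auto elim!: ssumE)
      have "q1 = p0 - s1" using 2 by simp
      then have "q1 \<in> P" using 1 2 lid_diff[OF P(1)] by blast
      then have "q1 \<in> S" using 2 NMpp S(2) by blast
      then have "s1 + q1 \<in> S" using 2 subspace_add[OF Ssp] by blast
      moreover have "y0 \<in> S" using 1 S(2) by blast
      ultimately have "y0 + (s1 + q1) \<in> S" using subspace_add[OF Ssp] by blast
      then show "z \<in> S" using 1 2 by simp
    qed
    then show ?thesis by blast
  qed simp
  have MppU: "Mpp \<noteq> UNIV"
  proof
    assume "Mpp = UNIV"
    then have "P \<subseteq> Q" using MppP by blast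
    then show False using nPQ by blast
  qed
  have core: "I = P \<inter> Q" if I: "lid I" "P \<inter> Q \<subseteq> I" "I \<subseteq> Mpp" for I
  proof (cases "I \<subseteq> P")
    case True
    then show ?thesis using I MppP by blast
  next
    case False
    then have XI: "X \<subseteq> ssum I N" using MonoP I(1) by blast
    have brXQ: "br x q \<in> P" if xq: "x \<in> X" "q \<in> Q" for x q
    proof -
      obtain i n where w: "i \<in> I" "n \<in> N" "x = i + n" using ssum_get[OF xq(1) XI] by blast
      have "br i q \<in> I \<inter> Q" using br_both[OF I(1) Q(1) w(1) xq(2)] .
      then have "br i q \<in> P" using MppQ I(3) by blast
      moreover have "br n q \<in> P" using lid_r[OF P(1)] w NP by blast
      ultimately show ?thesis using w lid_add[OF P(1)] by (simp add: br_addl)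
    qed
    obtain p q where pq: "p \<in> P" "q \<in> Q" "b1 = p + q" using ssum_get[OF ab1(2) XPQ] by blast
    have "br a1 b1 = br a1 p + br a1 q" using pq by (simp add: br_addr)
    then have "br a1 b1 \<in> P" using lid_l[OF P(1) pq(1)] brXQ[OF ab1(1) pq(2)] lid_add[OF P(1)] by simp
    moreover have "br a1 b1 \<in> X" using lid_l[OF X(1) ab1(2)] .
    ultimately show ?thesis using ab1 XP by blast
  qed
  have minQ: "minimal_ideal_over scale br (P \<inter> Q) Q" unfolding minimal_ideal_over_def
  proof (intro conjI)
    show "lid Q" using Q by blast
    show "P \<inter> Q \<subset> Q" using nQP by blast
    show "\<not> (\<exists>C. lid C \<and> P \<inter> Q \<subset> C \<and> C \<subset> Q)"
    proof
      assume "\<exists>C. lid C \<and> P \<inter> Q \<subset> C \<and> C \<subset> Q"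
      then obtain C where C: "lid C" "P \<inter> Q \<subset> C" "C \<subset> Q" by blast
      have "\<not> C \<subseteq> P" using C by blast
      then have XC: "X \<subseteq> ssum C N" using MonoP C(1) by blast
      have "Q \<subseteq> C"
      proof
        fix q assume q: "q \<in> Q"
        obtain x p where 1: "x \<in> X" "p \<in> P" "q = x + p" using ssum_get[OF q QXP] by blast
        obtain c n where 2: "c \<in> C" "n \<in> N" "x = c + n" using ssum_get[OF 1(1) XC] by blast
        have "q - c = p + n" using 1 2 by (simp add: algebra_simps)
        then have "q - c \<in> P" using 1 2 NP lid_add[OF P(1)] by auto
        moreover have "q - c \<in> Q" using q 2 C lid_diff[OF Q(1)] by blast
        ultimately have "q - c \<in> C" using C by blast
        then have "(q - c) + c \<in> C" using 2 lid_add[OF C(1)] by blast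
        then show "q \<in> C" by simp
      qed
      then show False using C by blast
    qed
  qed
  have minP: "minimal_ideal_over scale br (P \<inter> Q) P" unfolding minimal_ideal_over_def
  proof (intro conjI)
    show "lid P" using P by blast
    show "P \<inter> Q \<subset> P" using nPQ by blast
    show "\<not> (\<exists>C. lid C \<and> P \<inter> Q \<subset> C \<and> C \<subset> P)"
    proof
      assume "\<exists>C. lid C \<and> P \<inter> Q \<subset> C \<and> C \<subset> P"
      then obtain C where C: "lid C" "P \<inter> Q \<subset> C" "C \<subset> P" by blast
      have "\<not> C \<subseteq> Q" using C by blast
      then have XC: "X \<subseteq> ssum C N'" using MonoQ C(1) by blast
      have "P \<subseteq> C"
      proof
        fix p assume p: "p \<in> P"
        obtain x q where 1: "x \<in> X" "q \<in> Q" "p = x + q" using ssum_get[OF p PXQ] by blast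
        obtain c n where 2: "c \<in> C" "n \<in> N'" "x = c + n" using ssum_get[OF 1(1) XC] by blast
        have "p - c = q + n" using 1 2 by (simp add: algebra_simps)
        then have "p - c \<in> Q" using 1 2 N'Q lid_add[OF Q(1)] by auto
        moreover have "p - c \<in> P" using p 2 C lid_diff[OF P(1)] by blast
        ultimately have "p - c \<in> C" using C by blast
        then have "(p - c) + c \<in> C" using 2 lid_add[OF C(1)] by blast
        then show "p \<in> C" by simp
      qed
      then show False using C by blast
    qed
  qed
  have allmin: "E = Q \<or> E = P" if E: "minimal_ideal_over scale br (P \<inter> Q) E" for E
  proof -
    have El: "lid E" "P \<inter> Q \<subset> E" "\<not> (\<exists>C. lid C \<and> P \<inter> Q \<subset> C \<and> C \<subset> E)"
      using E unfolding minimal_ideal_over_def by blast+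
    have mP': "\<not> (\<exists>C. lid C \<and> P \<inter> Q \<subset> C \<and> C \<subset> P)" using minP unfolding minimal_ideal_over_def by blast
    have mQ': "\<not> (\<exists>C. lid C \<and> P \<inter> Q \<subset> C \<and> C \<subset> Q)" using minQ unfolding minimal_ideal_over_def by blast
    show ?thesis
    proof (rule ccontr)
      assume ne: "\<not> (E = Q \<or> E = P)"
      have nEP: "\<not> E \<subseteq> P" using ne mP' El by blast
      have nEQ: "\<not> E \<subseteq> Q" using ne mQ' El by blast
      have EP: "E \<inter> P = P \<inter> Q" using El nEP lid_int[OF El(1) P(1)] by blast
      have EQ: "E \<inter> Q = P \<inter> Q" using El nEQ lid_int[OF El(1) Q(1)] by blast
      have XE: "X \<subseteq> ssum E N" using MonoP[OF El(1) nEP] .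
      obtain e n where 1: "e \<in> E" "n \<in> N" "a1 = e + n" using ssum_get[OF ab1(1) XE] by blast
      obtain p q where 2: "p \<in> P" "q \<in> Q" "b1 = p + q" using ssum_get[OF ab1(2) XPQ] by blast
      have eq: "br a1 b1 = br e p + br e q + br n b1" using 1 2 by (simp add: br_addl br_addr algebra_simps)
      have "br e p \<in> P" using br_both[OF El(1) P(1) 1(1) 2(1)] EP by blast
      moreover have "br e q \<in> P" using br_both[OF El(1) Q(1) 1(1) 2(2)] EQ by blast
      moreover have "br n b1 \<in> P" using lid_r[OF P(1)] 1 NP by blast
      ultimately have "br a1 b1 \<in> P" using eq lid_add[OF P(1)] by simp
      moreover have "br a1 b1 \<in> X" using lid_l[OF X(1) ab1(2)] .
      ultimately show False using ab1 XP by blast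
    qed
  qed
  have naQ: "nonabelian_over br (P \<inter> Q) Q" unfolding nonabelian_over_def
  proof (rule ccontr)
    assume "\<not> (\<exists>a\<in>Q. \<exists>b\<in>Q. br a b \<notin> P \<inter> Q)"
    then have ab: "\<forall>a\<in>Q. \<forall>b\<in>Q. br a b \<in> P" by blast
    have XQ: "X \<subseteq> ssum Q N" using MonoP[OF Q(1) nQP] .
    obtain q1 n1 where 1: "q1 \<in> Q" "n1 \<in> N" "a1 = q1 + n1" using ssum_get[OF ab1(1) XQ] by blast
    obtain q2 n2 where 2: "q2 \<in> Q" "n2 \<in> N" "b1 = q2 + n2" using ssum_get[OF ab1(2) XQ] by blast
    have eq: "br a1 b1 = br q1 q2 + br q1 n2 + br n1 b1" using 1 2 by (simp add: br_addl br_addr algebra_simps)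
    have "br q1 q2 \<in> P" using ab 1 2 by blast
    moreover have "br q1 n2 \<in> P" using lid_l[OF P(1)] 2 NP by blast
    moreover have "br n1 b1 \<in> P" using lid_r[OF P(1)] 1 NP by blast
    ultimately have "br a1 b1 \<in> P" using eq lid_add[OF P(1)] by simp
    moreover have "br a1 b1 \<in> X" using lid_l[OF X(1) ab1(2)] .
    ultimately show False using ab1 XP by blast
  qed
  have naP: "nonabelian_over br (P \<inter> Q) P" unfolding nonabelian_over_def
  proof (rule ccontr)
    assume "\<not> (\<exists>a\<in>P. \<exists>b\<in>P. br a b \<notin> P \<inter> Q)"
    then have ab: "\<forall>a\<in>P. \<forall>b\<in>P. br a b \<in> Q" by blast
    have XP': "X \<subseteq> ssum P N'" using MonoQ[OF P(1) nPQ] .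
    obtain p1 n1 where 1: "p1 \<in> P" "n1 \<in> N'" "a3 = p1 + n1" using ssum_get[OF ab3(1) XP'] by blast
    obtain p2 n2 where 2: "p2 \<in> P" "n2 \<in> N'" "b3 = p2 + n2" using ssum_get[OF ab3(2) XP'] by blast
    have eq: "br a3 b3 = br p1 p2 + br p1 n2 + br n1 b3" using 1 2 by (simp add: br_addl br_addr algebra_simps)
    have "br p1 p2 \<in> Q" using ab 1 2 by blast
    moreover have "br p1 n2 \<in> Q" using lid_l[OF Q(1)] 2 N'Q by blast
    moreover have "br n1 b3 \<in> Q" using lid_r[OF Q(1)] 1 N'Q by blast
    ultimately have "br a3 b3 \<in> Q" using eq lid_add[OF Q(1)] by simp
    moreover have "br a3 b3 \<in> X" using lid_l[OF X(1) ab3(2)] .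
    ultimately show False using ab3 QX by blast
  qed
  have "maximal_subalgebra scale br Mpp" unfolding maximal_subalgebra_def
    using Mppsub MppU maxl by blast
  then have prim: "quotient_primitive scale br (P \<inter> Q)" unfolding quotient_primitive_def
    using PQl NMpp core by blast
  have t3: "quotient_primitive_type3 scale br (P \<inter> Q)" unfolding quotient_primitive_type3_def
  proof (intro conjI)
    show "quotient_primitive scale br (P \<inter> Q)" by (rule prim)
    show "\<exists>E1 E2. E1 \<noteq> E2 \<and> minimal_ideal_over scale br (P \<inter> Q) E1 \<and> minimal_ideal_over scale br (P \<inter> Q) E2
          \<and> (\<forall>E. minimal_ideal_over scale br (P \<inter> Q) E \<longrightarrow> E = E1 \<or> E = E2)"
      using PQ minQ minP allmin by blast
    show "\<forall>E. minimal_ideal_over scale br (P \<inter> Q) E \<longrightarrow> nonabelian_over br (P \<inter> Q) E"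
      using allmin naQ naP by blast
  qed
  show ?thesis using t3 PQ minQ minP iso1 iso2 by blast
qed

end


context lie
begin

lemma chief_lid: "chief_factor scale br A B \<Longrightarrow> lid A \<and> lid B"
  unfolding chief_factor_def by blast

lemma min_lid: "minimal_ideal_over scale br N E \<Longrightarrow> lid E"
  unfolding minimal_ideal_over_def by blast

lemma t3_extract:
  assumes q: "quotient_primitive_type3 scale br N" and ne: "E1 \<noteq> E2"
    and m1: "minimal_ideal_over scale br N E1" and m2: "minimal_ideal_over scale br N E2"
  shows "\<exists>M. t3data N M E1 E2 \<and> nonabelian_over br N E1 \<and> nonabelian_over br N E2"
proof -
  have qp: "quotient_primitive scale br N" and na: "\<forall>E. minimal_ideal_over scale br N E \<longrightarrow> nonabelian_over br N E"
    using q unfolding quotient_primitive_type3_def by blast+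
  have N: "lid N" using qp unfolding quotient_primitive_def by blast
  obtain M where M: "N \<subseteq> M" "maximal_subalgebra scale br M"
    "\<forall>I. lid I \<and> N \<subseteq> I \<and> I \<subseteq> M \<longrightarrow> I = N"
    using qp unfolding quotient_primitive_def by blast
  have "lie_subalgebra scale br M" "\<forall>S. lie_subalgebra scale br S \<and> M \<subseteq> S \<longrightarrow> S = M \<or> S = UNIV"
    using M(2) unfolding maximal_subalgebra_def by blast+
  then have "t3data N M E1 E2" unfolding t3data_def using N M ne m1 m2 by blast
  then show ?thesis using na m1 m2 by blast
qed

lemma conn_refl:
  assumes "chief_factor scale br A B" shows "L_connected scale br A B A B"
  unfolding L_connected_def using iso_refl chief_lid[OF assms] by blast

lemma conn_sym:
  assumes c1: "chief_factor scale br A1 B1" and c2: "chief_factor scale br A2 B2"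
    and c: "L_connected scale br A1 B1 A2 B2"
  shows "L_connected scale br A2 B2 A1 B1"
proof -
  have l1: "lid A1" "lid B1" using chief_lid[OF c1] by blast+
  have l2: "lid A2" "lid B2" using chief_lid[OF c2] by blast+
  from c[unfolded L_connected_def] show ?thesis
  proof
    assume "lie_mod_iso scale br A1 B1 A2 B2"
    then have "lie_mod_iso scale br A2 B2 A1 B1" using iso_sym l1 l2 by blast
    then show ?thesis unfolding L_connected_def by blast
  next
    assume "\<exists>N E1 E2. quotient_primitive_type3 scale br N \<and> E1 \<noteq> E2 \<and>
        minimal_ideal_over scale br N E1 \<and> minimal_ideal_over scale br N E2 \<and>
        lie_mod_iso scale br E1 N A1 B1 \<and> lie_mod_iso scale br E2 N A2 B2"
    then obtain N E1 E2 where "quotient_primitive_type3 scale br N" "E1 \<noteq> E2"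
        "minimal_ideal_over scale br N E1" "minimal_ideal_over scale br N E2"
        "lie_mod_iso scale br E1 N A1 B1" "lie_mod_iso scale br E2 N A2 B2" by blast
    then have "quotient_primitive_type3 scale br N \<and> E2 \<noteq> E1 \<and>
        minimal_ideal_over scale br N E2 \<and> minimal_ideal_over scale br N E1 \<and>
        lie_mod_iso scale br E2 N A2 B2 \<and> lie_mod_iso scale br E1 N A1 B1" by blast
    then show ?thesis unfolding L_connected_def by blast
  qed
qed

lemma conn_trans:
  assumes c1: "chief_factor scale br A1 B1" and c2: "chief_factor scale br A2 B2"
    and c3: "chief_factor scale br A3 B3"
    and h12: "L_connected scale br A1 B1 A2 B2" and h23: "L_connected scale br A2 B2 A3 B3"
  shows "L_connected scale br A1 B1 A3 B3"
proof -
  have l1: "lid A1" "lid B1" using chief_lid[OF c1] by blast+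
  have l2: "lid A2" "lid B2" using chief_lid[OF c2] by blast+
  have l3: "lid A3" "lid B3" using chief_lid[OF c3] by blast+
  consider (i12) "lie_mod_iso scale br A1 B1 A2 B2"
    | (t12) N E1 E2 where "quotient_primitive_type3 scale br N" "E1 \<noteq> E2"
        "minimal_ideal_over scale br N E1" "minimal_ideal_over scale br N E2"
        "lie_mod_iso scale br E1 N A1 B1" "lie_mod_iso scale br E2 N A2 B2"
    using h12 unfolding L_connected_def by blast
  then show ?thesis
  proof cases
    case i12
    consider (i23) "lie_mod_iso scale br A2 B2 A3 B3"
      | (t23) N E1 E2 where "quotient_primitive_type3 scale br N" "E1 \<noteq> E2"
          "minimal_ideal_over scale br N E1" "minimal_ideal_over scale br N E2"
          "lie_mod_iso scale br E1 N A2 B2" "lie_mod_iso scale br E2 N A3 B3"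
      using h23 unfolding L_connected_def by blast
    then show ?thesis
    proof cases
      case i23
      have "lie_mod_iso scale br A1 B1 A3 B3" using iso_trans[OF l1(1) l2(1) l3(2) i12 i23] .
      then show ?thesis unfolding L_connected_def by blast
    next
      case (t23 N E1 E2)
      have s: "lie_mod_iso scale br A2 B2 A1 B1" using iso_sym[OF l1 l2 i12] .
      have "lie_mod_iso scale br E1 N A1 B1" using iso_trans[OF min_lid[OF t23(3)] l2(1) l1(2) t23(5) s] .
      then show ?thesis unfolding L_connected_def using t23 by blast
    qed
  next
    case (t12 N E1 E2)
    consider (i23) "lie_mod_iso scale br A2 B2 A3 B3"
      | (t23) N' E1' E2' where "quotient_primitive_type3 scale br N'" "E1' \<noteq> E2'"
          "minimal_ideal_over scale br N' E1'" "minimal_ideal_over scale br N' E2'"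
          "lie_mod_iso scale br E1' N' A2 B2" "lie_mod_iso scale br E2' N' A3 B3"
      using h23 unfolding L_connected_def by blast
    then show ?thesis
    proof cases
      case i23
      have "lie_mod_iso scale br E2 N A3 B3" using iso_trans[OF min_lid[OF t12(4)] l2(1) l3(2) t12(6) i23] .
      then show ?thesis unfolding L_connected_def using t12 by blast
    next
      case (t23 N' E1' E2')
      obtain M where t: "t3data N M E1 E2" and nE1: "nonabelian_over br N E1"
        using t3_extract[OF t12(1-4)] by blast
      obtain M' where t': "t3data N' M' E1' E2'" and nE2': "nonabelian_over br N' E2'"
        using t3_extract[OF t23(1-4)] by blast
      have lE1: "lid E1" using min_lid[OF t12(3)] .
      have lE2: "lid E2" using min_lid[OF t12(4)] .
      have lE1': "lid E1'" using min_lid[OF t23(3)] .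
      have lE2': "lid E2'" using min_lid[OF t23(4)] .
      have lN: "lid N" and lN': "lid N'" using t t' unfolding t3data_def by blast+
      have "cent E2 N = cent A2 B2" using iso_cent[OF lE2 l2(1) l2(2) t12(6)] .
      moreover have "cent E1' N' = cent A2 B2" using iso_cent[OF lE1' l2(1) l2(2) t23(5)] .
      ultimately have eq: "E2' = E1" using t3_cent[OF t3_sym[OF t]] t3_cent[OF t'] by simp
      have iso1: "lie_mod_iso scale br E1 N A1 B1" using t12(5) .
      have iso3: "lie_mod_iso scale br E1 N' A3 B3" using t23(6) eq by simp
      show ?thesis
      proof (cases "E1' = E2")
        case True
        have "N = E1 \<inter> E2" using t3_int[OF t] by simp
        moreover have "N' = E1' \<inter> E2'" using t3_int[OF t'] by simp
        ultimately have NN: "N' = N" using True eq by blast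
        have s: "lie_mod_iso scale br A1 B1 E1 N" using iso_sym[OF lE1 lN l1 iso1] .
        have "lie_mod_iso scale br A1 B1 A3 B3" using iso_trans[OF l1(1) lE1 l3(2) s] iso3 NN by simp
        then show ?thesis unfolding L_connected_def by blast
      next
        case False
        have t'': "t3data N' M' E1' E1" using t' eq by simp
        have nX': "nonabelian_over br N' E1" using nE2' eq by simp
        have R: "quotient_primitive_type3 scale br (E2 \<inter> E1') \<and> E1' \<noteq> E2
           \<and> minimal_ideal_over scale br (E2 \<inter> E1') E1' \<and> minimal_ideal_over scale br (E2 \<inter> E1') E2
           \<and> lie_mod_iso scale br E1' (E2 \<inter> E1') E1 N \<and> lie_mod_iso scale br E2 (E2 \<inter> E1') E1 N'"
          using t3_trans[OF t t'' nE1 nX'] False by metis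
        have a1: "lie_mod_iso scale br E1' (E2 \<inter> E1') A1 B1" using iso_trans[OF lE1' lE1 l1(2)] R iso1 by blast
        have a3: "lie_mod_iso scale br E2 (E2 \<inter> E1') A3 B3" using iso_trans[OF lE2 lE1 l3(2)] R iso3 by blast
        show ?thesis unfolding L_connected_def using R a1 a3 by blast
      qed
    qed
  qed
qed

theorem main: "equiv (chief_factors scale br) (L_connected_rel scale br)"
proof (rule equivI)
  show "L_connected_rel scale br \<subseteq> chief_factors scale br \<times> chief_factors scale br"
    unfolding L_connected_rel_def chief_factors_def by auto
  show "refl_on (chief_factors scale br) (L_connected_rel scale br)"
  proof (rule refl_onI)
    fix x assume "x \<in> chief_factors scale br"
    then obtain A B where "x = (A, B)" "chief_factor scale br A B" unfolding chief_factors_def by blast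
    then show "(x, x) \<in> L_connected_rel scale br" unfolding L_connected_rel_def using conn_refl by blast
  qed
  show "sym (L_connected_rel scale br)"
  proof (rule symI)
    fix x y assume "(x, y) \<in> L_connected_rel scale br"
    then obtain A1 B1 A2 B2 where "x = (A1, B1)" "y = (A2, B2)" "chief_factor scale br A1 B1"
      "chief_factor scale br A2 B2" "L_connected scale br A1 B1 A2 B2"
      unfolding L_connected_rel_def by blast
    then show "(y, x) \<in> L_connected_rel scale br" unfolding L_connected_rel_def using conn_sym by blast
  qed
  show "trans (L_connected_rel scale br)"
  proof (rule transI)
    fix x y z assume "(x, y) \<in> L_connected_rel scale br" "(y, z) \<in> L_connected_rel scale br"
    then obtain A1 B1 A2 B2 A3 B3 where "x = (A1, B1)" "y = (A2, B2)" "z = (A3, B3)" "chief_factor scale br A1 B1"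
      "chief_factor scale br A2 B2" "chief_factor scale br A3 B3" "L_connected scale br A1 B1 A2 B2"
      "L_connected scale br A2 B2 A3 B3"
      unfolding L_connected_rel_def by auto
    then show "(x, z) \<in> L_connected_rel scale br" unfolding L_connected_rel_def using conn_trans by blast
  qed
qed

end

theorem theorem2p5:
  fixes scale :: "'k::field \<Rightarrow> 'v::ab_group_add \<Rightarrow> 'v" and br :: "'v \<Rightarrow> 'v \<Rightarrow> 'v"
  assumes "lie_algebra scale br" and "finite_dim scale"
  shows "equiv (chief_factors scale br) (L_connected_rel scale br)"
proof -
  interpret lie scale br by unfold_locales (rule assms(1))
  show ?thesis by (rule main)
qed


end
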